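(* Let $e\in\mathbb{Z}_{\ge0}$ and let $A\subseteq\mathbb{R}^2$ be finite and not contained in any element of $\mathcal{C}_{\le e}$. Let $\mathcal{R}$ be the family of subsets $B\subseteq A$ with $|B|=\binom{e+2}{2}$ such that $B$ is not contained in any element of $\mathcal{C}_{\le e}$. Then \[ |\mathcal{R}|\geq\frac{1}{2^{\binom{e+2}{2}-1}}|A|. \]
   Context: For $k\in\mathbb{Z}^+$, a curve of degree $k$ is the zero set in $\mathbb{R}^2$ of a polynomial in $\mathbb{R}[x,y]$ of degree exactly $k$; $\mathcal{C}_k$ is the family of such curves, $\mathcal{C}_{\le k}:=\bigcup_{j=1}^k\mathcal{C}_j$, and $\mathcal{C}_{\le 0}:=\emptyset$. *)

theory Defs
  imports Complex_Main
begin

definition bipoly_eval :: "nat \<Rightarrow> (nat \<Rightarrow> nat \<Rightarrow> real) \<Rightarrow> real \<Rightarrow> real \<Rightarrow> real" where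
  "bipoly_eval k c x y = (\<Sum>i\<le>k. \<Sum>j\<le>k - i. c i j * x ^ i * y ^ j)"

definition curves_deg :: "nat \<Rightarrow> (real \<times> real) set set" where
  "curves_deg k = {Z. \<exists>c. (\<exists>i j. i + j = k \<and> c i j \<noteq> 0) \<and>
                       Z = {(x, y). bipoly_eval k c x y = 0}}"

definition curves_le :: "nat \<Rightarrow> (real \<times> real) set set" where
  "curves_le e = (\<Union>j\<in>{1..e}. curves_deg j)"

end

theory Submission
  imports Defs "HOL-Library.Function_Algebras"
begin
definition fscale :: "real \<Rightarrow> ('a \<Rightarrow> real) \<Rightarrow> ('a \<Rightarrow> real)" where
  "fscale r f = (\<lambda>q. r * f q)"
interpretation fv: vector_space "fscale :: real \<Rightarrow> ('a \<Rightarrow> real) \<Rightarrow> _"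
  by unfold_locales (auto simp: fscale_def algebra_simps fun_eq_iff)
interpretation fvp: vector_space_pair "fscale :: real \<Rightarrow> ('a \<Rightarrow> real) \<Rightarrow> _" "fscale :: real \<Rightarrow> ('b \<Rightarrow> real) \<Rightarrow> _"
  by unfold_locales

definition dl :: "'a \<Rightarrow> 'a \<Rightarrow> real" where "dl q = (\<lambda>r. if r = q then 1 else 0)"

lemma sum_fun_at: "(\<Sum>q\<in>X. (g q :: 'a \<Rightarrow> real)) x = (\<Sum>q\<in>X. g q x)"
proof (cases "finite X")
  case True then show ?thesis by (induct X rule: finite_induct) auto
qed simp

lemma supp_span:
  assumes "finite X" "\<forall>q. q \<notin> X \<longrightarrow> f q = 0"
  shows "f \<in> fv.span (dl ` X)"
proof -
  have "f = (\<Sum>q\<in>X. fscale (f q) (dl q))"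
    using assms by (auto simp: fun_eq_iff sum_fun_at fscale_def dl_def if_distrib sum.delta cong: if_cong)
  also have "\<dots> \<in> fv.span (dl ` X)"
    by (intro fv.span_sum fv.span_scale fv.span_base) auto
  finally show ?thesis .
qed

lemma dl_inj: "inj dl"
  by (auto simp: inj_def dl_def fun_eq_iff)

lemma dl_indep: "fv.independent (dl ` X)"
proof
  assume "fv.dependent (dl ` X)"
  then obtain t u where t: "finite t" "t \<subseteq> dl ` X" "(\<Sum>v\<in>t. fscale (u v) v) = 0" and v: "\<exists>v\<in>t. u v \<noteq> 0"
    unfolding fv.dependent_explicit by blast
  from v obtain v where v: "v \<in> t" "u v \<noteq> 0" by blast
  then obtain q where q: "v = dl q" using t by blast
  have "0 = (\<Sum>w\<in>t. fscale (u w) w) q" using t by simp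
  also have "\<dots> = (\<Sum>w\<in>t. u w * w q)" by (simp add: sum_fun_at fscale_def)
  also have "\<dots> = (\<Sum>w\<in>t. if w = v then u w else 0)"
  proof (rule sum.cong)
    fix w assume "w \<in> t"
    then obtain r where r: "w = dl r" using t by blast
    show "u w * w q = (if w = v then u w else 0)"
    proof (cases "r = q")
      case True then show ?thesis using r q by (simp add: dl_def)
    next
      case False
      then have "w \<noteq> v" using r q dl_inj by (auto simp: inj_def)
      then show ?thesis using r False by (simp add: dl_def)
    qed
  qed simp
  also have "\<dots> = u v" using v t by (simp add: sum.delta)
  finally show False using v by simp
qed

definition Ie :: "nat \<Rightarrow> (nat \<times> nat) set" where "Ie k = {q. fst q + snd q \<le> k}"
definition vec :: "nat \<Rightarrow> real \<times> real \<Rightarrow> nat \<times> nat \<Rightarrow> real" where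
  "vec e p = (\<lambda>q. if q \<in> Ie e then fst p ^ fst q * snd p ^ snd q else 0)"
definition Wsp :: "nat \<Rightarrow> (nat \<times> nat \<Rightarrow> real) set" where
  "Wsp e = {f. \<forall>q. q \<notin> Ie e \<longrightarrow> f q = 0}"
definition ipr :: "nat \<Rightarrow> (nat \<times> nat \<Rightarrow> real) \<Rightarrow> (nat \<times> nat \<Rightarrow> real) \<Rightarrow> real" where
  "ipr e c f = (\<Sum>q\<in>Ie e. c q * f q)"

lemma finite_Ie: "finite (Ie k)"
  by (rule finite_subset[of _ "{0..k} \<times> {0..k}"]) (auto simp: Ie_def)

lemma card_Ie: "card (Ie e) = (e + 2) choose 2"
proof (induct e)
  case 0
  have "Ie 0 = {(0,0)}" by (auto simp: Ie_def)
  then show ?case by (simp add: numeral_2_eq_2)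
next
  case (Suc e)
  have eq: "Ie (Suc e) = Ie e \<union> (\<lambda>i. (i, Suc e - i)) ` {0..Suc e}"
    by (auto simp: Ie_def image_iff)
  have disj: "Ie e \<inter> (\<lambda>i. (i, Suc e - i)) ` {0..Suc e} = {}" by (auto simp: Ie_def)
  have inj: "inj_on (\<lambda>i. (i, Suc e - i)) {0..Suc e}" by (auto simp: inj_on_def)
  have "card (Ie (Suc e)) = card (Ie e) + (e + 2)"
    unfolding eq by (subst card_Un_disjoint) (auto simp: finite_Ie disj card_image[OF inj])
  also have "\<dots> = (Suc e + 2) choose 2"
    using Suc by (simp add: numeral_2_eq_2)
  finally show ?case .
qed

lemma bip: "bipoly_eval k c x y = (\<Sum>q\<in>Ie k. c (fst q) (snd q) * x ^ fst q * y ^ snd q)"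
proof -
  have "bipoly_eval k c x y = (\<Sum>q\<in>Sigma {..k} (\<lambda>i. {..k - i}). c (fst q) (snd q) * x ^ fst q * y ^ snd q)"
    unfolding bipoly_eval_def by (subst sum.Sigma) (auto simp: case_prod_beta)
  also have "Sigma {..k} (\<lambda>i. {..k - i}) = Ie k" by (auto simp: Ie_def)
  finally show ?thesis .
qed

lemma ipr_vec: "ipr e c (vec e p) = (\<Sum>q\<in>Ie e. c q * (fst p ^ fst q * snd p ^ snd q))"
  unfolding ipr_def vec_def by (rule sum.cong) auto

lemma curve_imp_D:
  assumes "C \<in> curves_le e" "S \<subseteq> C"
  shows "\<exists>c\<in>Wsp e. c \<noteq> 0 \<and> (\<forall>p\<in>S. ipr e c (vec e p) = 0)"
proof -
  obtain k where k: "1 \<le> k" "k \<le> e" "C \<in> curves_deg k" using assms(1) by (auto simp: curves_le_def)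
  then obtain cc i j where cc: "i + j = k" "cc i j \<noteq> 0" "C = {(x, y). bipoly_eval k cc x y = 0}"
    by (auto simp: curves_deg_def)
  define c where "c = (\<lambda>q. if q \<in> Ie k then cc (fst q) (snd q) else 0)"
  have sub: "Ie k \<subseteq> Ie e" using k by (auto simp: Ie_def)
  have "c \<in> Wsp e" using sub by (auto simp: c_def Wsp_def)
  moreover have "c \<noteq> 0"
  proof
    assume "c = 0"
    then have "c (i, j) = 0" by simp
    then show False using cc by (simp add: c_def Ie_def)
  qed
  moreover have "ipr e c (vec e p) = 0" if "p \<in> S" for p
  proof -
    have "ipr e c (vec e p) = (\<Sum>q\<in>Ie k. c q * (fst p ^ fst q * snd p ^ snd q))"
      unfolding ipr_vec by (rule sum.mono_neutral_right) (auto simp: finite_Ie sub c_def)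
    also have "\<dots> = bipoly_eval k cc (fst p) (snd p)"
      unfolding bip by (rule sum.cong) (auto simp: c_def)
    also have "\<dots> = 0" using that assms(2) cc(3) by (cases p) auto
    finally show ?thesis .
  qed
  ultimately show ?thesis by blast
qed

lemma D_imp_curve:
  assumes "S \<noteq> {}" "c \<in> Wsp e" "c \<noteq> 0" "\<forall>p\<in>S. ipr e c (vec e p) = 0"
  shows "\<exists>C\<in>curves_le e. S \<subseteq> C"
proof -
  define K where "K = {q \<in> Ie e. c q \<noteq> 0}"
  have fK: "finite K" using finite_Ie by (simp add: K_def)
  obtain q0 where q0: "c q0 \<noteq> 0" using assms(3) by (auto simp: fun_eq_iff)
  then have q0K: "q0 \<in> K" using assms(2) by (cases q0) (auto simp: K_def Wsp_def)
  define k where "k = Max ((\<lambda>q. fst q + snd q) ` K)"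
  have "k \<in> (\<lambda>q. fst q + snd q) ` K"
    unfolding k_def using fK q0K by (intro Max_in) auto
  then obtain qm where qm: "qm \<in> K" "k = fst qm + snd qm" by blast
  have kmax: "fst q + snd q \<le> k" if "q \<in> K" for q
    using fK that by (auto simp: k_def)
  have ke: "k \<le> e" using qm by (auto simp: K_def Ie_def)
  have czero: "c q = 0" if "q \<notin> Ie k" for q
  proof (rule ccontr)
    assume "c q \<noteq> 0"
    then have "q \<in> K" using assms(2) by (cases q) (auto simp: K_def Wsp_def)
    then show False using kmax that by (auto simp: Ie_def)
  qed
  have sub: "Ie k \<subseteq> Ie e" using ke by (auto simp: Ie_def)
  have evk: "ipr e c (vec e p) = bipoly_eval k (\<lambda>i j. c (i, j)) (fst p) (snd p)" for p
  proof -
    have "ipr e c (vec e p) = (\<Sum>q\<in>Ie k. c q * (fst p ^ fst q * snd p ^ snd q))"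
      unfolding ipr_vec by (rule sum.mono_neutral_right) (auto simp: finite_Ie sub czero)
    then show ?thesis unfolding bip by (simp add: mult.assoc)
  qed
  have k1: "1 \<le> k"
  proof (rule ccontr)
    assume "\<not> 1 \<le> k"
    then have k0: "k = 0" by simp
    have "Ie 0 = {(0,0)}" by (auto simp: Ie_def)
    obtain p where "p \<in> S" using assms(1) by blast
    then have "0 = ipr e c (vec e p)" using assms(4) by simp
    also have "\<dots> = c (0,0)" using evk[of p] k0 \<open>Ie 0 = {(0,0)}\<close> unfolding bip by simp
    finally have "c (0,0) = 0" by simp
    moreover have "qm = (0,0)" using qm k0 by (cases qm) auto
    ultimately show False using qm by (simp add: K_def)
  qed
  let ?C = "{(x, y). bipoly_eval k (\<lambda>i j. c (i, j)) x y = 0}"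
  have "?C \<in> curves_deg k"
    unfolding curves_deg_def using qm
    by (intro CollectI exI[of _ "\<lambda>i j. c (i, j)"] conjI refl exI[of _ "fst qm"] exI[of _ "snd qm"]) (auto simp: K_def)
  then have "?C \<in> curves_le e" using k1 ke by (auto simp: curves_le_def)
  moreover have "S \<subseteq> ?C" using assms(4) evk by auto
  ultimately show ?thesis by blast
qed

lemma W_subspace: "fv.subspace (Wsp e)"
  unfolding fv.subspace_def by (auto simp: Wsp_def fscale_def)

lemma vec_W: "vec e p \<in> Wsp e"
  by (auto simp: vec_def Wsp_def)

lemma W_span: "Wsp e \<subseteq> fv.span (dl ` Ie e)"
  using supp_span[OF finite_Ie] by (auto simp: Wsp_def)

lemma E_W: "dl ` Ie e \<subseteq> Wsp e"
  by (auto simp: Wsp_def dl_def)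

lemma span_E: "fv.span (dl ` Ie e) \<subseteq> Wsp e"
  by (rule fv.span_minimal[OF E_W W_subspace])

lemma card_E: "card (dl ` Ie e) = card (Ie e)"
  by (rule card_image) (use dl_inj in \<open>auto simp: inj_on_def inj_def\<close>)

lemma indep_bound:
  assumes "fv.independent B" "B \<subseteq> Wsp e"
  shows "finite B \<and> card B \<le> card (Ie e)"
  using fv.independent_span_bound[of "dl ` Ie e" B] assms W_span finite_Ie card_E by auto

lemma ipr_span:
  assumes "\<forall>v\<in>V. ipr e c v = 0" "v \<in> fv.span V"
  shows "ipr e c v = 0"
proof -
  have "fv.subspace {v. ipr e c v = 0}"
    unfolding fv.subspace_def
    by (auto simp: ipr_def fscale_def sum.distrib distrib_left sum_distrib_left[symmetric] algebra_simps)
  then have "fv.span V \<subseteq> {v. ipr e c v = 0}"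
    using assms(1) by (intro fv.span_minimal) auto
  then show ?thesis using assms(2) by auto
qed

lemma easy_dir:
  assumes "Wsp e \<subseteq> fv.span (vec e ` B)" "c \<in> Wsp e" "\<forall>p\<in>B. ipr e c (vec e p) = 0"
  shows "c = 0"
proof -
  have "ipr e c c = 0" using ipr_span[of "vec e ` B" e c c] assms by auto
  then have "(\<Sum>q\<in>Ie e. c q * c q) = 0" by (simp add: ipr_def)
  then have "\<forall>q\<in>Ie e. c q * c q = 0"
    by (subst (asm) sum_nonneg_eq_0_iff) (auto simp: finite_Ie)
  then show ?thesis using assms(2) by (auto simp: Wsp_def fun_eq_iff)
qed

lemma hard_dir:
  assumes "\<not> Wsp e \<subseteq> fv.span (vec e ` A)"
  shows "\<exists>c\<in>Wsp e. c \<noteq> 0 \<and> (\<forall>p\<in>A. ipr e c (vec e p) = 0)"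
proof -
  obtain B where B: "B \<subseteq> vec e ` A" "fv.independent B" "vec e ` A \<subseteq> fv.span B"
    using fv.maximal_independent_subset by blast
  have BW: "B \<subseteq> Wsp e" using B(1) vec_W by auto
  have fB: "finite B" and cB: "card B \<le> card (Ie e)" using indep_bound[OF B(2) BW] by auto
  have "fv.span B \<subseteq> fv.span (vec e ` A)" using B(1) by (rule fv.span_mono)
  then obtain w where w: "w \<in> Wsp e" "w \<notin> fv.span B" using assms by blast
  have "card (insert w B) \<le> card (Ie e)"
    using indep_bound[of "insert w B" e] fv.independent_insertI[OF w(2) B(2)] BW w(1) by auto
  moreover have "w \<notin> B" using w(2) fv.span_base by blast
  ultimately have cB': "card B < card (Ie e)" using card_insert_disjoint[OF fB] by simp
  define F where "F = (\<lambda>c::nat\<times>nat\<Rightarrow>real. \<lambda>b. if b \<in> B then ipr e c b else 0)"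
  have linF: "Vector_Spaces.linear fscale fscale F"
    unfolding Vector_Spaces.linear_iff
    by (auto simp: F_def fun_eq_iff ipr_def fscale_def sum.distrib distrib_right sum_distrib_left algebra_simps
        fv.vector_space_axioms)
  have "\<exists>c\<in>Wsp e. F c = 0 \<and> c \<noteq> 0"
  proof (rule ccontr)
    assume "\<not> ?thesis"
    then have "inj_on F (Wsp e)"
      using fvp.linear_inj_on_iff_eq_0[OF linF W_subspace] by blast
    then have injE: "inj_on F (fv.span (dl ` Ie e))" using span_E inj_on_subset by blast
    have indF: "fv.independent (F ` dl ` Ie e)"
      by (rule fvp.linear_independent_injective_image[OF linF dl_indep injE])
    have "F ` dl ` Ie e \<subseteq> fv.span (dl ` B)"
      using supp_span[OF fB] by (auto simp: F_def)
    then have "card (F ` dl ` Ie e) \<le> card (dl ` B)"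
      using fv.independent_span_bound[OF _ indF] fB by auto
    also have "\<dots> \<le> card B" using fB card_image_le by blast
    also have "card (F ` dl ` Ie e) = card (Ie e)"
      using card_image[OF inj_on_subset[OF injE fv.span_superset]] card_E by simp
    finally show False using cB' by simp
  qed
  then obtain c where c: "c \<in> Wsp e" "F c = 0" "c \<noteq> 0" by blast
  have "\<forall>b\<in>B. ipr e c b = 0"
  proof
    fix b assume "b \<in> B"
    then show "ipr e c b = 0" using fun_cong[OF c(2), of b] by (simp add: F_def)
  qed
  then have "\<forall>p\<in>A. ipr e c (vec e p) = 0" using ipr_span[of B e c] B(3) by auto
  then show ?thesis using c by blast
qed

lemma pow2_ge: "Suc n \<le> 2 ^ n"
  by (induct n) auto

lemma final_ineq:
  fixes n N :: nat
  assumes "N \<le> n" "1 \<le> N"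
  shows "real n / 2 ^ (N - 1) \<le> real n - real N + 1"
proof -
  define P :: real where "P = 2 ^ (N - 1)"
  have "real (Suc (N - 1)) \<le> real (2 ^ (N - 1))" using pow2_ge[of "N - 1"] by linarith
  then have hP: "real N \<le> P" using assms(2) by (simp add: P_def)
  have P1: "1 \<le> P" using hP assms(2) by linarith
  have "0 \<le> (real n - real N) * (P - 1)" using assms P1 by (intro mult_nonneg_nonneg) auto
  then have "real n \<le> (real n - real N + 1) * P" using hP by (simp add: algebra_simps)
  then show ?thesis using P1 by (simp add: P_def divide_le_eq)
qed

lemma vec_inj: "1 \<le> e \<Longrightarrow> inj (vec e)"
proof (rule injI)
  fix p q assume e: "1 \<le> e" and h: "vec e p = vec e q"
  have "(1,0) \<in> Ie e" "(0,1) \<in> Ie e" using e by (auto simp: Ie_def)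
  then have "fst p = fst q" "snd p = snd q"
    using fun_cong[OF h, of "(1,0)"] fun_cong[OF h, of "(0,1)"] by (auto simp: vec_def)
  then show "p = q" by (simp add: prod_eq_iff)
qed

lemma vec_nz: "vec e p \<noteq> 0"
proof
  assume "vec e p = 0"
  then have "vec e p (0,0) = 0" by simp
  then show False by (simp add: vec_def Ie_def)
qed

theorem lemma16:
  fixes e :: nat and A :: "(real \<times> real) set"
  assumes "finite A"
    and "\<not> (\<exists>C\<in>curves_le e. A \<subseteq> C)"
  shows "real (card {B. B \<subseteq> A \<and> card B = (e + 2) choose 2 \<and> \<not> (\<exists>C\<in>curves_le e. B \<subseteq> C)})
           \<ge> real (card A) / 2 ^ (((e + 2) choose 2) - 1)"
proof (cases "e = 0")
  case True
  have cl: "curves_le 0 = {}" by (simp add: curves_le_def)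
  have "{B. B \<subseteq> A \<and> card B = 1} = (\<lambda>x. {x}) ` A"
    by (auto simp: card_Suc_eq)
  moreover have "card ((\<lambda>x. {x}) ` A) = card A" by (rule card_image) (auto simp: inj_on_def)
  ultimately show ?thesis using True cl by (simp add: numeral_2_eq_2)
next
  case False
  then have e1: "1 \<le> e" by simp
  define N where "N = card (Ie e)"
  have N: "N = (e + 2) choose 2" by (simp add: N_def card_Ie)
  have N1: "1 \<le> N" unfolding N_def using finite_Ie by (metis One_nat_def Suc_leI card_gt_0_iff ex_in_conv Ie_def le0 mem_Collect_eq add_0 fst_conv snd_conv)
  define Fam where "Fam = {B. B \<subseteq> A \<and> card B = (e + 2) choose 2 \<and> \<not> (\<exists>C\<in>curves_le e. B \<subseteq> C)}"
  have good: "B \<in> Fam" if "B \<subseteq> A" "card B = N" "Wsp e \<subseteq> fv.span (vec e ` B)" for B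
  proof -
    have "\<not> (\<exists>C\<in>curves_le e. B \<subseteq> C)"
    proof
      assume "\<exists>C\<in>curves_le e. B \<subseteq> C"
      then obtain c where "c \<in> Wsp e" "c \<noteq> 0" "\<forall>p\<in>B. ipr e c (vec e p) = 0"
        using curve_imp_D by blast
      then show False using easy_dir[OF that(3)] by blast
    qed
    then show ?thesis using that N by (simp add: Fam_def)
  qed
  have Ane: "A \<noteq> {}"
  proof
    assume "A = {}"
    define cc :: "nat \<Rightarrow> nat \<Rightarrow> real" where "cc = (\<lambda>i j. if i = 1 \<and> j = 0 then (1::real) else 0)"
    have "{(x, y). bipoly_eval 1 cc x y = 0} \<in> curves_deg 1"
      unfolding curves_deg_def by (intro CollectI exI[of _ cc] conjI refl exI[of _ 1] exI[of _ 0]) (auto simp: cc_def)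
    then have "{(x, y). bipoly_eval 1 cc x y = 0} \<in> curves_le e" using e1 by (auto simp: curves_le_def)
    then show False using assms(2) \<open>A = {}\<close> by blast
  qed
  have hA: "Wsp e \<subseteq> fv.span (vec e ` A)"
  proof (rule ccontr)
    assume "\<not> ?thesis"
    then obtain c where "c \<in> Wsp e" "c \<noteq> 0" "\<forall>p\<in>A. ipr e c (vec e p) = 0"
      using hard_dir by blast
    then show False using D_imp_curve[OF Ane] assms(2) by blast
  qed
  have inj: "inj (vec e)" using vec_inj[OF e1] .
  obtain B0 where B0: "B0 \<subseteq> vec e ` A" "fv.independent B0" "vec e ` A \<subseteq> fv.span B0"
    using fv.maximal_independent_subset by blast
  have B0W: "B0 \<subseteq> Wsp e" using B0(1) vec_W by auto
  have fB0: "finite B0" and cB0: "card B0 \<le> N" using indep_bound[OF B0(2) B0W] N_def by auto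
  have WB0: "Wsp e \<subseteq> fv.span B0"
    using hA fv.span_mono[OF B0(3)] fv.span_span by blast
  have "card (dl ` Ie e) \<le> card B0"
    using fv.independent_span_bound[OF fB0 dl_indep] E_W WB0 by blast
  then have cardB0: "card B0 = N" using cB0 card_E N_def by simp
  define P0 where "P0 = {p \<in> A. vec e p \<in> B0}"
  have P0A: "P0 \<subseteq> A" by (auto simp: P0_def)
  have imP0: "vec e ` P0 = B0" using B0(1) by (auto simp: P0_def)
  have cardP0: "card P0 = N"
    using card_image[OF inj_on_subset[OF inj, of P0]] imP0 cardB0 by simp
  have fP0: "finite P0" using finite_subset[OF P0A assms(1)] .
  have key: "\<exists>y\<in>P0. Wsp e \<subseteq> fv.span (vec e ` insert x (P0 - {y}))" if x: "x \<in> A - P0" for x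
  proof -
    have vx: "vec e x \<in> fv.span B0" using B0(3) x by auto
    obtain T where T: "T \<subseteq> B0 \<and> vec e x \<in> fv.span T"
      and Tmin: "\<And>T'. T' \<subseteq> B0 \<and> vec e x \<in> fv.span T' \<Longrightarrow> card T \<le> card T'"
      using ex_has_least_nat[of "\<lambda>T. T \<subseteq> B0 \<and> vec e x \<in> fv.span T" B0 card] vx by blast
    have fT: "finite T" using T fB0 finite_subset by blast
    have "T \<noteq> {}" using T vec_nz[of e x] by auto
    then obtain y' where y': "y' \<in> T" by blast
    have nsp: "vec e x \<notin> fv.span (T - {y'})"
    proof
      assume "vec e x \<in> fv.span (T - {y'})"
      then have "card T \<le> card (T - {y'})" using Tmin T by blast
      then show False using card_Diff1_less[OF fT y'] by linarith
    qed
    have "insert y' (T - {y'}) = T" using y' by blast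
    then have "y' \<in> fv.span (insert (vec e x) (T - {y'}))"
      using fv.in_span_insert[of "vec e x" y' "T - {y'}"] T nsp by simp
    also have "\<dots> \<subseteq> fv.span (insert (vec e x) (B0 - {y'}))"
      using T by (intro fv.span_mono) auto
    finally have "B0 \<subseteq> fv.span (insert (vec e x) (B0 - {y'}))"
      using fv.span_superset[of "insert (vec e x) (B0 - {y'})"] by blast
    then have "fv.span B0 \<subseteq> fv.span (insert (vec e x) (B0 - {y'}))"
      by (intro fv.span_minimal) auto
    moreover obtain y where y: "y \<in> P0" "y' = vec e y" using y' T imP0 by blast
    moreover have "vec e ` insert x (P0 - {y}) = insert (vec e x) (B0 - {y'})"
      using imP0 y image_set_diff[OF inj, of P0 "{y}"] by simp
    ultimately have "Wsp e \<subseteq> fv.span (vec e ` insert x (P0 - {y}))" using WB0 by (metis subset_trans)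
    then show ?thesis using y(1) by blast
  qed
  define g where "g x = (SOME y. y \<in> P0 \<and> Wsp e \<subseteq> fv.span (vec e ` insert x (P0 - {y})))" for x
  have g: "g x \<in> P0 \<and> Wsp e \<subseteq> fv.span (vec e ` insert x (P0 - {g x}))" if "x \<in> A - P0" for x
    unfolding g_def using key[OF that] by (metis (no_types, lifting) someI_ex)
  define h where "h x = insert x (P0 - {g x})" for x
  have hFam: "h x \<in> Fam" if x: "x \<in> A - P0" for x
  proof (rule good)
    show "h x \<subseteq> A" using x P0A by (auto simp: h_def)
    show "card (h x) = N" using x g[OF x] cardP0 fP0 N1 by (simp add: h_def card_insert_if)
    show "Wsp e \<subseteq> fv.span (vec e ` h x)" using g[OF x] by (simp add: h_def)
  qed
  have P0Fam: "P0 \<in> Fam" using good[OF P0A cardP0] WB0 imP0 by simp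
  have hinj: "inj_on h (A - P0)"
  proof (rule inj_onI)
    fix x y assume "x \<in> A - P0" "y \<in> A - P0" "h x = h y"
    then have "h x - P0 = h y - P0" by simp
    moreover have "h x - P0 = {x}" using \<open>x \<in> A - P0\<close> by (auto simp: h_def)
    moreover have "h y - P0 = {y}" using \<open>y \<in> A - P0\<close> by (auto simp: h_def)
    ultimately show "x = y" by simp
  qed
  have P0notin: "P0 \<notin> h ` (A - P0)" by (auto simp: h_def)
  have finFam: "finite Fam"
    by (rule finite_subset[of _ "Pow A"]) (auto simp: Fam_def assms(1))
  have "card (insert P0 (h ` (A - P0))) \<le> card Fam"
    using P0Fam hFam finFam by (intro card_mono) auto
  moreover have "card (insert P0 (h ` (A - P0))) = card A - N + 1"
    using P0notin card_image[OF hinj] assms(1) card_Diff_subset[OF fP0 P0A] cardP0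
    by (simp add: finite_subset)
  moreover have "N \<le> card A" using card_mono[OF assms(1) P0A] cardP0 by simp
  ultimately have "real (card A) - real N + 1 \<le> real (card Fam)" by linarith
  moreover have "real (card A) / 2 ^ (N - 1) \<le> real (card A) - real N + 1"
    using final_ineq[OF \<open>N \<le> card A\<close> N1] .
  ultimately have "real (card A) / 2 ^ (N - 1) \<le> real (card Fam)" by linarith
  then show ?thesis unfolding Fam_def N by simp
qed

end
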